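(* Let $Y(0),Y(1)$ be integrable real potential outcomes and $X$ a random vector in $\mathbb{R}^{d_X}$ with support $\mathcal{X}=\mathcal{X}_0\cup\mathcal{X}_1$, $\mathcal{X}_0\cap\mathcal{X}_1=\emptyset$, with $D=1\{X\in\mathcal{X}_1\}$ and $Y=DY(1)+(1-D)Y(0)$. Write $X=(X^{(1)},X^{(2)})$ for a fixed split of the coordinates and correspondingly $x=(x^{(1)},x^{(2)})$. Suppose $x\mapsto E[Y(d)|X=x]$ is continuous on $\mathcal{X}$ for $d=0,1$, and conditional local comonotonicity holds: for every $x_1\in\mathcal{X}$ there is a neighborhood $N$ of $x_1$ such that for all $x_2\in N\cap\mathcal{X}$ with $x_2^{(2)}=x_1^{(2)}$, $$E[Y(1)|X=x_1]\geq E[Y(1)|X=x_2]\iff E[Y(0)|X=x_1]\geq E[Y(0)|X=x_2].$$ Let $\mathcal{F}=\mathrm{cl}(\mathrm{int}(\mathcal{X}_1))\cap\mathrm{cl}(\mathrm{int}(\mathcal{X}_0))$ and for $d\in\{0,1\}$ let $g_d$ be a function on $\mathcal{X}_d\cup\mathcal{F}$ with $g_d(x)=E[Y|X=x]$ for $x\in\mathcal{X}_d$ and continuous at each point of $\mathcal{F}$. Suppose that for some $d$ and some $x\in\mathcal{X}_d$ there is a continuous path $p:[0,1]\to\mathcal{X}_d\cup\mathcal{F}$ with $p(0)=x$, $p(1)=x^*\in\mathcal{F}$, $p(t)^{(2)}=x^{(2)}$ for all $t\in[0,1]$, and $E[Y|X=p(t)]=E[Y|X=x]$ for all $t\in(0,1)$.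 Then $E[Y(1)|X=x]=g_1(x^* )$ and $E[Y(0)|X=x]=g_0(x^* )$.
   Context: Conditional expectation functions are understood as the unique continuous versions; for $z\in\mathcal{X}$, $E[Y|X=z]$ equals $E[Y(d)|X=z]$ when $z\in\mathcal{X}_d$. *)

theory Defs
  imports "HOL-Probability.Probability"
begin

definition rv_support :: "'w measure \<Rightarrow> ('w \<Rightarrow> 'a::metric_space) \<Rightarrow> 'a set" where
  "rv_support M X = {z. \<forall>e>0. measure M {w \<in> space M. X w \<in> ball z e} > 0}"

text \<open>m is a version of the conditional expectation function z \<mapsto> E[Yd | X = z].\<close>
definition is_cef :: "'w measure \<Rightarrow> ('w \<Rightarrow> 'a::topological_space) \<Rightarrow> ('w \<Rightarrow> real) \<Rightarrow> ('a \<Rightarrow> real) \<Rightarrow> bool" where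
  "is_cef M X Yd m \<longleftrightarrow> m \<in> borel_measurable borel \<and> integrable M (\<lambda>w. m (X w)) \<and>
     (\<forall>B\<in>sets borel. (\<integral>w. indicator (X -` B \<inter> space M) w * Yd w \<partial>M)
                    = (\<integral>w. indicator (X -` B \<inter> space M) w * m (X w) \<partial>M))"

text \<open>Observed-outcome CEF E[Y|X=z]: equals E[Y(1)|X=z] on X1 and E[Y(0)|X=z] otherwise
  (on the support X = X0 \<union> X1 this is E[Y(0)|X=z] exactly for z \<in> X0).\<close>
definition obs_cef :: "'a set \<Rightarrow> ('a \<Rightarrow> real) \<Rightarrow> ('a \<Rightarrow> real) \<Rightarrow> 'a \<Rightarrow> real" where
  "obs_cef X1 m0 m1 z = (if z \<in> X1 then m1 z else m0 z)"

end

theory Submission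
  imports Defs
begin



lemma LM1:
  fixes g :: "real \<Rightarrow> real"
  assumes ab: "a < b" and cg: "continuous_on {a..b} g"
    and lm: "\<forall>t\<in>{a<..<b}. \<exists>d>0. \<forall>s\<in>{a<..<b}. \<bar>s - t\<bar> < d \<longrightarrow> g s \<le> g t"
  shows "g b \<le> g a"
proof (rule ccontr)
  assume "\<not> g b \<le> g a" hence lt: "g a < g b" by simp
  define v where "v = (g a + g b) / 2"
  obtain c where c: "a \<le> c" "c \<le> b" "g c = v"
    using IVT'[of g a v b] lt ab cg unfolding v_def by force
  define W where "W = {a..b} \<inter> g -` {..v}"
  have clW: "closed W" unfolding W_def by (rule continuous_closed_preimage[OF cg]) auto
  have cW: "c \<in> W" using c unfolding W_def by auto
  have bW: "bdd_above W" unfolding W_def by (rule bdd_aboveI[of _ b]) auto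
  define T where "T = Sup W"
  have TW: "T \<in> W" unfolding T_def using closed_contains_Sup[OF _ bW clW] cW by blast
  have cT: "c \<le> T" unfolding T_def using cW bW by (rule cSup_upper)
  have "c \<noteq> a" using c lt v_def by auto
  hence aT: "a < T" using c cT by auto
  have "T \<noteq> b" using TW lt v_def unfolding W_def by auto
  hence Tb: "T < b" using TW unfolding W_def by auto
  have "T \<in> {a<..<b}" using aT Tb by auto
  then obtain d where d: "d > 0" "\<forall>s\<in>{a<..<b}. \<bar>s - T\<bar> < d \<longrightarrow> g s \<le> g T"
    using lm by blast
  define e where "e = min (d / 2) ((b - T) / 2)"
  define s where "s = T + e"
  have s1: "T < s \<and> s < b \<and> \<bar>s - T\<bar> < d"
  proof -
    have "e > 0" unfolding e_def using d(1) Tb by auto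
    moreover have "e \<le> d/2" unfolding e_def by (rule min.cobounded1)
    moreover have "e \<le> (b - T)/2" unfolding e_def by (rule min.cobounded2)
    ultimately show ?thesis unfolding s_def by (auto simp: abs_if)
  qed
  hence "g s \<le> g T" using d aT by auto
  also have "g T \<le> v" using TW unfolding W_def by auto
  finally have "s \<in> W" using s1 aT unfolding W_def by auto
  hence "s \<le> T" unfolding T_def using bW by (rule cSup_upper)
  thus False using s1 by simp
qed

lemma LM2:
  fixes g :: "real \<Rightarrow> real"
  assumes ab: "a < b" and cg: "continuous_on {a..b} g"
    and lm: "\<forall>t\<in>{a<..<b}. \<exists>d>0. \<forall>s\<in>{a<..<b}. \<bar>s - t\<bar> < d \<longrightarrow> g s \<le> g t"
  shows "g a \<le> g b"
proof (rule ccontr)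
  assume "\<not> g a \<le> g b" hence lt: "g b < g a" by simp
  define v where "v = (g a + g b) / 2"
  obtain c where c: "a \<le> c" "c \<le> b" "g c = v"
    using IVT2'[of g b v a] lt ab cg unfolding v_def by force
  define W where "W = {a..b} \<inter> g -` {..v}"
  have clW: "closed W" unfolding W_def by (rule continuous_closed_preimage[OF cg]) auto
  have cW: "c \<in> W" using c unfolding W_def by auto
  have bW: "bdd_below W" unfolding W_def by (rule bdd_belowI[of _ a]) auto
  define T where "T = Inf W"
  have TW: "T \<in> W" unfolding T_def using closed_contains_Inf[OF _ bW clW] cW by blast
  have cT: "T \<le> c" unfolding T_def using cW bW by (rule cInf_lower)
  have "c \<noteq> b" using c lt v_def by auto
  hence Tb: "T < b" using c cT by auto
  have "T \<noteq> a" using TW lt v_def unfolding W_def by auto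
  hence aT: "a < T" using TW unfolding W_def by auto
  have "T \<in> {a<..<b}" using aT Tb by auto
  then obtain d where d: "d > 0" "\<forall>s\<in>{a<..<b}. \<bar>s - T\<bar> < d \<longrightarrow> g s \<le> g T"
    using lm by blast
  define e where "e = min (d / 2) ((T - a) / 2)"
  define s where "s = T - e"
  have s1: "s < T \<and> a < s \<and> \<bar>s - T\<bar> < d"
  proof -
    have "e > 0" unfolding e_def using d(1) aT by auto
    moreover have "e \<le> d/2" unfolding e_def by (rule min.cobounded1)
    moreover have "e \<le> (T - a)/2" unfolding e_def by (rule min.cobounded2)
    ultimately show ?thesis unfolding s_def by (auto simp: abs_if)
  qed
  hence "g s \<le> g T" using d Tb by auto
  also have "g T \<le> v" using TW unfolding W_def by auto
  finally have "s \<in> W" using s1 Tb unfolding W_def by auto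
  hence "T \<le> s" unfolding T_def using bW by (rule cInf_lower)
  thus False using s1 by simp
qed

lemma LM:
  fixes g :: "real \<Rightarrow> real"
  assumes "a < b" and "continuous_on {a..b} g"
    and "\<forall>t\<in>{a<..<b}. \<exists>d>0. \<forall>s\<in>{a<..<b}. \<bar>s - t\<bar> < d \<longrightarrow> g s \<le> g t"
  shows "g a = g b"
  using LM1[OF assms] LM2[OF assms] by simp

lemma core:
  fixes f h :: "real \<Rightarrow> real"
  assumes cf: "continuous_on {0..1} f" and ch: "continuous_on {0..1} h"
    and alt: "\<forall>t\<in>{0<..<1}. f t = f 0 \<or> h t = f 0"
    and loc: "\<forall>t\<in>{0..1}. \<exists>d>0. \<forall>s\<in>{0..1}. \<bar>s - t\<bar> < d \<longrightarrow> (h s \<le> h t \<longleftrightarrow> f s \<le> f t)"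
  shows "\<forall>t\<in>{0..1}. f t = f 0 \<and> h t = h 0"
proof -
  have F: "f t0 = f 0" if t0: "t0 \<in> {0..1}" for t0
  proof (rule ccontr)
    assume ne: "f t0 \<noteq> f 0"
    define U where "U = {0..t0} \<inter> f -` {f 0}"
    have cf0: "continuous_on {0..t0} f" by (rule continuous_on_subset[OF cf]) (use t0 in auto)
    have clU: "closed U" unfolding U_def by (rule continuous_closed_preimage[OF cf0]) auto
    have "0 \<in> U" using t0 unfolding U_def by auto
    have bU: "bdd_above U" unfolding U_def by (rule bdd_aboveI[of _ t0]) auto
    define a where "a = Sup U"
    have aU: "a \<in> U" unfolding a_def using closed_contains_Sup[OF _ bU clU] \<open>0 \<in> U\<close> by blast
    have a0: "0 \<le> a" unfolding a_def using \<open>0 \<in> U\<close> bU by (rule cSup_upper)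
    have "a \<noteq> t0" using aU ne unfolding U_def by auto
    hence at0: "a < t0" using aU unfolding U_def by auto
    have nf: "f t \<noteq> f 0" if "t \<in> {a<..t0}" for t
    proof
      assume "f t = f 0"
      hence "t \<in> U" using that a0 unfolding U_def by auto
      hence "t \<le> a" unfolding a_def using bU by (rule cSup_upper)
      thus False using that by auto
    qed
    have hc: "h t = f 0" if "t \<in> {a<..<t0}" for t
    proof -
      have "t \<in> {0<..<1}" using that a0 t0 by auto
      hence "f t = f 0 \<or> h t = f 0" using alt by blast
      moreover have "f t \<noteq> f 0" using nf that by auto
      ultimately show ?thesis by blast
    qed
    have "f a = f t0"
    proof (rule LM[OF at0])
      show "continuous_on {a..t0} f" by (rule continuous_on_subset[OF cf]) (use t0 a0 in auto)
      show "\<forall>t\<in>{a<..<t0}. \<exists>d>0. \<forall>s\<in>{a<..<t0}. \<bar>s - t\<bar> < d \<longrightarrow> f s \<le> f t"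
      proof
        fix t assume t: "t \<in> {a<..<t0}"
        have "t \<in> {0..1}" using t a0 t0 by auto
        then obtain d where d: "d > 0" "\<forall>s\<in>{0..1}. \<bar>s - t\<bar> < d \<longrightarrow> (h s \<le> h t \<longleftrightarrow> f s \<le> f t)"
          using loc by blast
        show "\<exists>d>0. \<forall>s\<in>{a<..<t0}. \<bar>s - t\<bar> < d \<longrightarrow> f s \<le> f t"
        proof (intro exI[of _ d] conjI ballI impI)
          fix s assume s: "s \<in> {a<..<t0}" "\<bar>s - t\<bar> < d"
          have "h s \<le> h t" using hc[OF s(1)] hc[OF t] by simp
          thus "f s \<le> f t" using d s a0 t0 by auto
        qed (rule d(1))
      qed
    qed
    moreover have "f a = f 0" using aU unfolding U_def by auto
    ultimately show False using ne by simp
  qed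
  have H: "h t0 = h 0" if t0: "t0 \<in> {0..1}" for t0
  proof (cases "t0 = 0")
    case False
    hence t00: "0 < t0" using t0 by auto
    show ?thesis
    proof (rule sym, rule LM[OF t00])
      show "continuous_on {0..t0} h" by (rule continuous_on_subset[OF ch]) (use t0 in auto)
      show "\<forall>t\<in>{0<..<t0}. \<exists>d>0. \<forall>s\<in>{0<..<t0}. \<bar>s - t\<bar> < d \<longrightarrow> h s \<le> h t"
      proof
        fix t assume t: "t \<in> {0<..<t0}"
        have "t \<in> {0..1}" using t t0 by auto
        then obtain d where d: "d > 0" "\<forall>s\<in>{0..1}. \<bar>s - t\<bar> < d \<longrightarrow> (h s \<le> h t \<longleftrightarrow> f s \<le> f t)"
          using loc by blast
        show "\<exists>d>0. \<forall>s\<in>{0<..<t0}. \<bar>s - t\<bar> < d \<longrightarrow> h s \<le> h t"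
        proof (intro exI[of _ d] conjI ballI impI)
          fix s assume s: "s \<in> {0<..<t0}" "\<bar>s - t\<bar> < d"
          have "f s \<le> f t" using F[of s] F[of t] s t t0 by auto
          thus "h s \<le> h t" using d s t0 by auto
        qed (rule d(1))
      qed
    qed
  qed simp
  show ?thesis using F H by blast
qed

lemma g_eq:
  fixes g m :: "'a::t2_space \<Rightarrow> real"
  assumes "z \<in> closure A" "continuous (at z within A) g" "continuous (at z within A) m"
    "\<forall>y\<in>A. g y = m y"
  shows "g z = m z"
proof (cases "z \<in> A")
  case True thus ?thesis using assms by auto
next
  case False
  hence lp: "z islimpt A" using assms(1) unfolding closure_def by auto
  hence nb: "at z within A \<noteq> bot" using trivial_limit_within by blast
  have ev: "eventually (\<lambda>y. g y = m y) (at z within A)"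
    unfolding eventually_at_filter using assms(4) by (auto intro: always_eventually)
  have "(g \<longlongrightarrow> g z) (at z within A)" using assms(2) unfolding continuous_within .
  hence "(m \<longlongrightarrow> g z) (at z within A)" using tendsto_cong[OF ev] by simp
  moreover have "(m \<longlongrightarrow> m z) (at z within A)" using assms(3) unfolding continuous_within .
  ultimately show ?thesis using tendsto_unique[OF nb] by blast
qed

lemma supp_closed:
  fixes X :: "'w \<Rightarrow> 'a::metric_space"
  assumes "prob_space M" "X \<in> borel_measurable M"
  shows "closed {z. \<forall>e>0. measure M {w \<in> space M. X w \<in> ball z e} > 0}"
proof -
  have fm: "finite_measure M" using assms(1) by (rule prob_space.finite_measure)
  have meas: "{w \<in> space M. X w \<in> ball z e} \<in> sets M" for z e
  proof -
    have "X -` ball z e \<inter> space M \<in> sets M" using measurable_sets[OF assms(2)] by auto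
    moreover have "X -` ball z e \<inter> space M = {w \<in> space M. X w \<in> ball z e}" by auto
    ultimately show ?thesis by simp
  qed
  show ?thesis unfolding closed_def open_contains_ball
  proof
    fix z assume "z \<in> - {z. \<forall>e>0. measure M {w \<in> space M. X w \<in> ball z e} > 0}"
    then obtain e where e: "e > 0" "\<not> measure M {w \<in> space M. X w \<in> ball z e} > 0" by auto
    show "\<exists>e>0. ball z e \<subseteq> - {z. \<forall>e>0. measure M {w \<in> space M. X w \<in> ball z e} > 0}"
    proof (intro exI[of _ e] conjI subsetI)
      fix z' assume z': "z' \<in> ball z e"
      define r where "r = e - dist z z'"
      have r: "r > 0" using z' unfolding r_def by auto
      have "ball z' r \<subseteq> ball z e"
      proof
        fix y assume "y \<in> ball z' r"
        thus "y \<in> ball z e" using dist_triangle[of z y z'] unfolding r_def by auto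
      qed
      hence "measure M {w \<in> space M. X w \<in> ball z' r} \<le> measure M {w \<in> space M. X w \<in> ball z e}"
        by (intro finite_measure.finite_measure_mono[OF fm] meas) auto
      hence "\<not> measure M {w \<in> space M. X w \<in> ball z' r} > 0" using e(2) by linarith
      thus "z' \<in> - {z. \<forall>e>0. measure M {w \<in> space M. X w \<in> ball z e} > 0}"
        using r by auto
    qed (rule e(1))
  qed
qed


theorem theoremB3:
  fixes M :: "'w measure"
    and X :: "'w \<Rightarrow> real ^ 'n"
    and Y0 Y1 :: "'w \<Rightarrow> real"
    and S :: "'n set"
    and Xs X0 X1 :: "(real ^ 'n) set"
    and m0 m1 g0 g1 :: "real ^ 'n \<Rightarrow> real"
    and x xstar :: "real ^ 'n"
    and p :: "real \<Rightarrow> real ^ 'n"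
  assumes prob: "prob_space M"
    and X_meas: "X \<in> borel_measurable M"
    and Y0_int: "integrable M Y0" and Y1_int: "integrable M Y1"
    and supp: "Xs = rv_support M X"
    and part: "Xs = X0 \<union> X1" "X0 \<inter> X1 = {}"
    and cef0: "is_cef M X Y0 m0" and cef1: "is_cef M X Y1 m1"
    and cont0: "continuous_on Xs m0" and cont1: "continuous_on Xs m1"
    and comono: "\<forall>x1\<in>Xs. \<exists>N. open N \<and> x1 \<in> N \<and>
                   (\<forall>x2\<in>N \<inter> Xs. (\<forall>i\<in>S. x2 $ i = x1 $ i) \<longrightarrow>
                      (m1 x1 \<ge> m1 x2 \<longleftrightarrow> m0 x1 \<ge> m0 x2))"
    and F_def: "F = closure (interior X1) \<inter> closure (interior X0)"
    and g0: "\<forall>z\<in>X0. g0 z = obs_cef X1 m0 m1 z"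
            "\<forall>z\<in>F. continuous (at z within (X0 \<union> F)) g0"
    and g1: "\<forall>z\<in>X1. g1 z = obs_cef X1 m0 m1 z"
            "\<forall>z\<in>F. continuous (at z within (X1 \<union> F)) g1"
    and x_path: "(x \<in> X0 \<and> p ` {0..1} \<subseteq> X0 \<union> F) \<or> (x \<in> X1 \<and> p ` {0..1} \<subseteq> X1 \<union> F)"
    and p_cont: "continuous_on {0..1} p"
    and p0: "p 0 = x" and p1: "p 1 = xstar" and xstar_F: "xstar \<in> F"
    and p_fix: "\<forall>t\<in>{0..1}. \<forall>i\<in>S. p t $ i = x $ i"
    and p_level: "\<forall>t\<in>{0<..<1}. obs_cef X1 m0 m1 (p t) = obs_cef X1 m0 m1 x"
  shows "m1 x = g1 xstar \<and> m0 x = g0 xstar"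
  proof -
  have Xs_closed: "closed Xs" unfolding supp rv_support_def
    by (rule supp_closed[OF prob X_meas])
  have F_sub: "F \<subseteq> Xs"
  proof -
    have "F \<subseteq> closure X1" unfolding F_def using closure_mono[OF interior_subset[of X1]] by auto
    also have "\<dots> \<subseteq> closure Xs" using part(1) by (intro closure_mono) auto
    also have "\<dots> = Xs" using Xs_closed by simp
    finally show ?thesis .
  qed
  have p_in: "p ` {0..1} \<subseteq> Xs" using x_path F_sub part(1) by auto
  have cf0: "continuous_on {0..1} (m0 \<circ> p)"
    by (rule continuous_on_compose[OF p_cont continuous_on_subset[OF cont0 p_in]])
  have cf1: "continuous_on {0..1} (m1 \<circ> p)"
    by (rule continuous_on_compose[OF p_cont continuous_on_subset[OF cont1 p_in]])
  have loc: "\<forall>t\<in>{0..1}. \<exists>d>0. \<forall>s\<in>{0..1}. \<bar>s - t\<bar> < d \<longrightarrow>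
      ((m1 \<circ> p) s \<le> (m1 \<circ> p) t \<longleftrightarrow> (m0 \<circ> p) s \<le> (m0 \<circ> p) t)"
  proof
    fix t :: real assume t: "t \<in> {0..1}"
    hence pt: "p t \<in> Xs" using p_in by auto
    then obtain N where N: "open N" "p t \<in> N"
      "\<forall>x2\<in>N \<inter> Xs. (\<forall>i\<in>S. x2 $ i = p t $ i) \<longrightarrow> (m1 (p t) \<ge> m1 x2 \<longleftrightarrow> m0 (p t) \<ge> m0 x2)"
      using comono by blast
    obtain e where e: "e > 0" "ball (p t) e \<subseteq> N" using N(1,2) open_contains_ball by blast
    obtain d where d: "d > 0" "\<forall>s\<in>{0..1}. dist s t < d \<longrightarrow> dist (p s) (p t) < e"
      using p_cont t e(1) unfolding continuous_on_iff by blast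
    show "\<exists>d>0. \<forall>s\<in>{0..1}. \<bar>s - t\<bar> < d \<longrightarrow>
      ((m1 \<circ> p) s \<le> (m1 \<circ> p) t \<longleftrightarrow> (m0 \<circ> p) s \<le> (m0 \<circ> p) t)"
    proof (intro exI[of _ d] conjI ballI impI)
      fix s :: real assume s: "s \<in> {0..1}" "\<bar>s - t\<bar> < d"
      have "dist (p s) (p t) < e" using d s by (simp add: dist_real_def)
      hence "p s \<in> N" using e(2) by (auto simp: dist_commute)
      moreover have "p s \<in> Xs" using s p_in by auto
      moreover have "\<forall>i\<in>S. p s $ i = p t $ i" using p_fix s t by auto
      ultimately have "p s \<in> N \<inter> Xs" "\<forall>i\<in>S. p s $ i = p t $ i" by auto
      hence "m1 (p t) \<ge> m1 (p s) \<longleftrightarrow> m0 (p t) \<ge> m0 (p s)" using N(3) by blast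
      thus "(m1 \<circ> p) s \<le> (m1 \<circ> p) t \<longleftrightarrow> (m0 \<circ> p) s \<le> (m0 \<circ> p) t"
        by simp
    qed (rule d(1))
  qed
  have eqs: "m0 xstar = m0 x \<and> m1 xstar = m1 x"
    using x_path
  proof
    assume xa: "x \<in> X0 \<and> p ` {0..1} \<subseteq> X0 \<union> F"
    have ox: "obs_cef X1 m0 m1 x = m0 x" using xa part(2) unfolding obs_cef_def by auto
    have alt: "\<forall>t\<in>{0<..<1}. (m0 \<circ> p) t = (m0 \<circ> p) 0 \<or> (m1 \<circ> p) t = (m0 \<circ> p) 0"
    proof
      fix t :: real assume t: "t \<in> {0<..<1}"
      have "obs_cef X1 m0 m1 (p t) = m0 x" using p_level t ox by auto
      thus "(m0 \<circ> p) t = (m0 \<circ> p) 0 \<or> (m1 \<circ> p) t = (m0 \<circ> p) 0"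
        using p0 unfolding obs_cef_def by (auto split: if_splits)
    qed
    have "\<forall>t\<in>{0..1}. (m0 \<circ> p) t = (m0 \<circ> p) 0 \<and> (m1 \<circ> p) t = (m1 \<circ> p) 0"
      by (rule core[OF cf0 cf1 alt loc])
    hence "(m0 \<circ> p) 1 = (m0 \<circ> p) 0 \<and> (m1 \<circ> p) 1 = (m1 \<circ> p) 0"
      by (rule bspec) simp
    thus ?thesis using p0 p1 by simp
  next
    assume xa: "x \<in> X1 \<and> p ` {0..1} \<subseteq> X1 \<union> F"
    have ox: "obs_cef X1 m0 m1 x = m1 x" using xa unfolding obs_cef_def by auto
    have alt: "\<forall>t\<in>{0<..<1}. (m1 \<circ> p) t = (m1 \<circ> p) 0 \<or> (m0 \<circ> p) t = (m1 \<circ> p) 0"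
    proof
      fix t :: real assume t: "t \<in> {0<..<1}"
      have "obs_cef X1 m0 m1 (p t) = m1 x" using p_level t ox by auto
      thus "(m1 \<circ> p) t = (m1 \<circ> p) 0 \<or> (m0 \<circ> p) t = (m1 \<circ> p) 0"
        using p0 unfolding obs_cef_def by (auto split: if_splits)
    qed
    have loc': "\<forall>t\<in>{0..1}. \<exists>d>0. \<forall>s\<in>{0..1}. \<bar>s - t\<bar> < d \<longrightarrow>
      ((m0 \<circ> p) s \<le> (m0 \<circ> p) t \<longleftrightarrow> (m1 \<circ> p) s \<le> (m1 \<circ> p) t)"
    proof
      fix t :: real assume "t \<in> {0..1}"
      then obtain d where d: "d > 0" "\<forall>s\<in>{0..1}. \<bar>s - t\<bar> < d \<longrightarrow>
        ((m1 \<circ> p) s \<le> (m1 \<circ> p) t \<longleftrightarrow> (m0 \<circ> p) s \<le> (m0 \<circ> p) t)" using loc by blast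
      show "\<exists>d>0. \<forall>s\<in>{0..1}. \<bar>s - t\<bar> < d \<longrightarrow>
        ((m0 \<circ> p) s \<le> (m0 \<circ> p) t \<longleftrightarrow> (m1 \<circ> p) s \<le> (m1 \<circ> p) t)"
        using d by blast
    qed
    have "\<forall>t\<in>{0..1}. (m1 \<circ> p) t = (m1 \<circ> p) 0 \<and> (m0 \<circ> p) t = (m0 \<circ> p) 0"
      by (rule core[OF cf1 cf0 alt loc'])
    hence "(m1 \<circ> p) 1 = (m1 \<circ> p) 0 \<and> (m0 \<circ> p) 1 = (m0 \<circ> p) 0"
      by (rule bspec) simp
    thus ?thesis using p0 p1 by simp
  qed
  have xsXs: "xstar \<in> Xs" using xstar_F F_sub by auto
  have g0x: "g0 xstar = m0 xstar"
  proof (rule g_eq[of xstar "interior X0"])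
    show "xstar \<in> closure (interior X0)" using xstar_F F_def by auto
    show "continuous (at xstar within interior X0) g0"
    proof (rule continuous_within_subset)
      show "continuous (at xstar within (X0 \<union> F)) g0" using g0(2) xstar_F by blast
      show "interior X0 \<subseteq> X0 \<union> F" using interior_subset by blast
    qed
    show "continuous (at xstar within interior X0) m0"
    proof (rule continuous_within_subset)
      show "continuous (at xstar within Xs) m0"
        using cont0 xsXs continuous_on_eq_continuous_within by blast
      show "interior X0 \<subseteq> Xs" using interior_subset[of X0] part(1) by blast
    qed
    show "\<forall>y\<in>interior X0. g0 y = m0 y"
    proof
      fix y assume "y \<in> interior X0"
      hence y: "y \<in> X0" "y \<notin> X1" using interior_subset[of X0] part(2) by blast+
      thus "g0 y = m0 y" using g0(1) unfolding obs_cef_def by simp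
    qed
  qed
  have g1x: "g1 xstar = m1 xstar"
  proof (rule g_eq[of xstar "interior X1"])
    show "xstar \<in> closure (interior X1)" using xstar_F F_def by auto
    show "continuous (at xstar within interior X1) g1"
    proof (rule continuous_within_subset)
      show "continuous (at xstar within (X1 \<union> F)) g1" using g1(2) xstar_F by blast
      show "interior X1 \<subseteq> X1 \<union> F" using interior_subset by blast
    qed
    show "continuous (at xstar within interior X1) m1"
    proof (rule continuous_within_subset)
      show "continuous (at xstar within Xs) m1"
        using cont1 xsXs continuous_on_eq_continuous_within by blast
      show "interior X1 \<subseteq> Xs" using interior_subset[of X1] part(1) by blast
    qed
    show "\<forall>y\<in>interior X1. g1 y = m1 y"
      using g1(1) interior_subset[of X1] unfolding obs_cef_def by auto
  qed
  show ?thesis using eqs g0x g1x by simp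
qed

end
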